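(* Let $0<\varepsilon\le 1/64$ and $s\ge-\log\varepsilon$. Let $R_e,R_+:\mathbb R^3\to\mathbb R$ be functions with bounded derivatives up to order $4$, both supported in $\mathcal X_+=\{|y_1|\le e^{3s/2},|\check y|\le e^{s/2}\}$, and define $$\Phi(y)=\int_{\mathbb R^3}\frac{(R_+-R_e)(y-z)\,e^{-5s/2}}{(e^{-3s}z_1^2+e^{-s}|\check z|^2)^{1/2}}dz.$$ Then for every $y\in\mathcal X(s)=\{|y_1|\le2\varepsilon^{1/2}e^{3s/2},|\check y|\le2\varepsilon^{1/6}e^{s/2}\}$, every multi-index $|\gamma|\le4$ and $\nu\in\{2,3\}$, $$|\partial^\gamma\partial_1\Phi(y)|\lesssim e^{-3s/2}\big(\|\partial^\gamma R_e\|_{L^\infty}+\|\partial^\gamma R_+\|_{L^\infty}\big),\qquad |\partial^\gamma\partial_\nu\Phi(y)|\lesssim e^{-s/2}\big(\|\partial^\gamma R_e\|_{L^\infty}+\|\partial^\gamma R_+\|_{L^\infty}\big),$$ with implicit constants independent of $s,\varepsilon$ and of $R_e,R_+$.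
   Context: $\check y=(y_2,y_3)$. $\Phi$ is the Coulomb potential generated by the charge density $R_+-R_e$, written in the anisotropic self-similar variables $y_1=e^{3s/2}x_1$, $\check y=e^{s/2}\check x$. *)

theory Defs
  imports "HOL-Analysis.Analysis"
begin

text \<open>Points of R^3 are vectors real^3 with components y $ 1, y $ 2, y $ 3.
  The transverse part is (y $ 2, y $ 3) with Euclidean length cnorm y.\<close>

definition cnorm :: "real^3 \<Rightarrow> real" where
  "cnorm y = sqrt ((y $ 2)\<^sup>2 + (y $ 3)\<^sup>2)"

definition pd :: "3 \<Rightarrow> (real^3 \<Rightarrow> real) \<Rightarrow> real^3 \<Rightarrow> real" where
  "pd i f y = deriv (\<lambda>t. f (y + t *\<^sub>R axis i 1)) 0"

text \<open>Iterated partial derivatives; pdl (i # is) f = pd i (pdl is f), so a list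
  of indices encodes a multi-index (its length is the order).\<close>
fun pdl :: "3 list \<Rightarrow> (real^3 \<Rightarrow> real) \<Rightarrow> real^3 \<Rightarrow> real" where
  "pdl [] f = f"
| "pdl (i # is) f = pd i (pdl is f)"

definition C4b :: "(real^3 \<Rightarrow> real) \<Rightarrow> bool" where
  "C4b f \<longleftrightarrow>
     (\<forall>is i y. length is < 4 \<longrightarrow>
        ((\<lambda>t. pdl is f (y + t *\<^sub>R axis i 1)) has_real_derivative pdl (i # is) f y) (at 0))
   \<and> (\<forall>is. length is \<le> 4 \<longrightarrow>
        continuous_on UNIV (pdl is f) \<and> bounded (range (pdl is f)))"

text \<open>Sup norm (L^infinity norm for continuous functions).\<close>
definition supn :: "(real^3 \<Rightarrow> real) \<Rightarrow> real" where
  "supn g = (SUP y. \<bar>g y\<bar>)"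

definition Xplus :: "real \<Rightarrow> (real^3) set" where
  "Xplus s = {y. \<bar>y $ 1\<bar> \<le> exp (3 * s / 2) \<and> cnorm y \<le> exp (s / 2)}"

definition Xs :: "real \<Rightarrow> real \<Rightarrow> (real^3) set" where
  "Xs \<epsilon> s = {y. \<bar>y $ 1\<bar> \<le> 2 * sqrt \<epsilon> * exp (3 * s / 2) \<and> cnorm y \<le> 2 * root 6 \<epsilon> * exp (s / 2)}"

definition Phi :: "real \<Rightarrow> (real^3 \<Rightarrow> real) \<Rightarrow> (real^3 \<Rightarrow> real) \<Rightarrow> real^3 \<Rightarrow> real" where
  "Phi s Rel Rpl y = (LINT z|lborel.
      (Rpl (y - z) - Rel (y - z)) * exp (-5 * s / 2)
        / sqrt (exp (-3 * s) * (z $ 1)\<^sup>2 + exp (-s) * (cnorm z)\<^sup>2))"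

end

theory Submission
  imports Defs
begin


lemma lborel_translate: "distr lborel borel (\<lambda>x::'a::euclidean_space. t + x) = lborel"
  using lborel_affine[of 1 t] by (simp add: density_1)

lemma integral_translate:
  fixes g :: "'a::euclidean_space \<Rightarrow> real"
  assumes "g \<in> borel_measurable borel"
  shows "(LINT x|lborel. g x) = (LINT x|lborel. g (t + x))"
proof -
  have "(LINT x|lborel. g x) = (LINT x|distr lborel borel (\<lambda>x. t + x). g x)"
    by (simp add: lborel_translate)
  also have "\<dots> = (LINT x|lborel. g (t + x))"
    by (rule integral_distr) (use assms in auto)
  finally show ?thesis .
qed

lemma nn_integral_translate:
  fixes g :: "'a::euclidean_space \<Rightarrow> ennreal"
  assumes "g \<in> borel_measurable borel"
  shows "(\<integral>\<^sup>+ x. g x \<partial>lborel) = (\<integral>\<^sup>+ x. g (t + x) \<partial>lborel)"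
proof -
  have "(\<integral>\<^sup>+ x. g x \<partial>lborel) = (\<integral>\<^sup>+ x. g x \<partial>distr lborel borel (\<lambda>x. t + x))"
    by (simp add: lborel_translate)
  also have "\<dots> = (\<integral>\<^sup>+ x. g (t + x) \<partial>lborel)"
    by (rule nn_integral_distr) (use assms in auto)
  finally show ?thesis .
qed

lemma Basis3: "(Basis :: (real^3) set) = {axis 1 1, axis 2 1, axis 3 1}"
proof -
  have "(UNIV::3 set) = {1,2,3}" using exhaust_3 by auto
  then show ?thesis by (auto simp: Basis_vec_def) (metis exhaust_3)
qed

lemma axis_distinct3: "axis (1::3) (1::real) \<noteq> axis 2 1" "axis (1::3) (1::real) \<noteq> axis 3 1"
   "axis (2::3) (1::real) \<noteq> axis 3 1"
  by (simp_all add: axis_eq_axis)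

lemma nn_prod3:
  fixes g1 g2 g3 :: "real \<Rightarrow> real"
  assumes [measurable]: "g1 \<in> borel_measurable borel" "g2 \<in> borel_measurable borel" "g3 \<in> borel_measurable borel"
  assumes "\<And>u. 0 \<le> g1 u" "\<And>u. 0 \<le> g2 u" "\<And>u. 0 \<le> g3 u"
  shows "(\<integral>\<^sup>+z. ennreal (g1 (z$1) * g2 (z$2) * g3 (z$3)) \<partial>(lborel::(real^3) measure))
     = (\<integral>\<^sup>+u. g1 u \<partial>lborel) * (\<integral>\<^sup>+u. g2 u \<partial>lborel) * (\<integral>\<^sup>+u. g3 u \<partial>lborel)"
proof -
  define f where "f b u = ennreal (if b = axis 1 1 then g1 u else if b = axis 2 1 then g2 u else g3 u)" for b :: "real^3" and u
  have fm: "f b \<in> borel_measurable borel" for b unfolding f_def by measurable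
  have fn: "0 \<le> f b u" for b u unfolding f_def using assms by auto
  have "(\<integral>\<^sup>+x. (\<Prod>b\<in>Basis. f b (x \<bullet> b)) \<partial>(lborel::(real^3) measure)) = (\<Prod>b\<in>Basis. (\<integral>\<^sup>+x. f b x \<partial>lborel))"
    by (rule nn_integral_lborel_prod) (use fm fn in auto)
  moreover have "(\<Prod>b\<in>Basis. f b (x \<bullet> b)) = ennreal (g1 (x$1) * g2 (x$2) * g3 (x$3))" for x :: "real^3"
    unfolding Basis3 using axis_distinct3 assms by (simp add: f_def inner_axis axis_eq_axis ennreal_mult' mult.assoc)
  moreover have "(\<Prod>b\<in>(Basis::(real^3) set). (\<integral>\<^sup>+x. f b x \<partial>lborel)) =  (\<integral>\<^sup>+u. g1 u \<partial>lborel) * (\<integral>\<^sup>+u. g2 u \<partial>lborel) * (\<integral>\<^sup>+u. g3 u \<partial>lborel)"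
    unfolding Basis3 using axis_distinct3 by (simp add: f_def axis_eq_axis mult.assoc)
  ultimately show ?thesis by simp
qed



lemma abs_powr_has_integral:
  assumes "A \<ge> 0" "p > -1"
  shows "((\<lambda>u::real. \<bar>u\<bar> powr p) has_integral (2 * (A powr (p+1) / (p+1)))) {-A..A}"
proof -
  have h0: "((\<lambda>u::real. \<bar>u\<bar> powr p) has_integral (A powr (p+1) / (p+1))) {0..A}"
    using has_integral_powr_from_0[OF assms(2) assms(1)]
    by (subst has_integral_cong[of _ _ "\<lambda>x. x powr p"]) auto
  have "((\<lambda>u::real. \<bar>-u\<bar> powr p) has_integral (A powr (p+1) / (p+1))) {-A..-0}"
    using has_integral_reflect_real[where f="\<lambda>u::real. \<bar>u\<bar> powr p" and a=0 and b=A, THEN iffD2, OF h0] .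
  then have h1: "((\<lambda>u::real. \<bar>u\<bar> powr p) has_integral (A powr (p+1) / (p+1))) {-A..0}"
    by (simp only: abs_minus_cancel minus_zero)
  have "((\<lambda>u::real. \<bar>u\<bar> powr p) has_integral (A powr (p+1) / (p+1) + A powr (p+1) / (p+1))) {-A..A}"
    by (rule has_integral_combine[OF _ _ h1 h0]) (use assms in auto)
  then show ?thesis by (simp only: mult_2)
qed

lemma nn_1d:
  assumes "A \<ge> 0" "p > -1" "w > 0"
  shows "(\<integral>\<^sup>+u. ennreal (indicator {-A..A} u * (w * \<bar>u\<bar>) powr p) \<partial>lborel)
     = ennreal (w powr p * (2 * (A powr (p+1) / (p+1))))"
proof (rule nn_integral_has_integral_lborel)
  show "(\<lambda>u. indicator {-A..A} u * (w * \<bar>u\<bar>) powr p) \<in> borel_measurable borel" by measurable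
  show "0 \<le> indicator {-A..A} u * (w * \<bar>u\<bar>) powr p" for u by simp
  have "((\<lambda>u::real. w powr p * \<bar>u\<bar> powr p) has_integral (w powr p * (2 * (A powr (p+1) / (p+1))))) {-A..A}"
    by (rule has_integral_mult_right[OF abs_powr_has_integral[OF assms(1,2)]])
  then have "((\<lambda>u::real. (w * \<bar>u\<bar>) powr p) has_integral (w powr p * (2 * (A powr (p+1) / (p+1))))) {-A..A}"
    using assms by (simp add: powr_mult)
  then show "((\<lambda>u. indicator {-A..A} u * (w * \<bar>u\<bar>) powr p) has_integral (w powr p * (2 * (A powr (p+1) / (p+1))))) UNIV"
  proof -
    have "(\<lambda>u. indicator {-A..A} u * (w * \<bar>u\<bar>) powr p) = (\<lambda>u. if u \<in> {-A..A} then (w * \<bar>u\<bar>) powr p else 0)"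
      by (auto simp: fun_eq_iff indicator_def)
    then show ?thesis using \<open>((\<lambda>u::real. (w * \<bar>u\<bar>) powr p) has_integral _) _\<close>
      by (simp only: has_integral_restrict_UNIV)
  qed
qed



lemma hyper_null:
  fixes i :: 3
  shows "AE z in (lborel::(real^3) measure). z$i \<noteq> 0"
proof -
  have ind: "(\<integral>\<^sup>+u. ennreal (indicator {0} u) \<partial>lborel) = 0"
    by (simp add: ennreal_indicator)
  define g where "g k u = (if k = i then indicator {0::real} u else (1::real))" for k :: 3 and u
  have [measurable]: "g k \<in> borel_measurable borel" for k unfolding g_def by measurable
  have gn: "0 \<le> g k u" for k u by (simp add: g_def)
  have gi: "(\<integral>\<^sup>+ u. ennreal (g i u) \<partial>lborel) = 0" using ind by (simp add: g_def)
  have "(\<integral>\<^sup>+ u. ennreal (g 1 u) \<partial>lborel) * (\<integral>\<^sup>+ u. ennreal (g 2 u) \<partial>lborel) * (\<integral>\<^sup>+ u. ennreal (g 3 u) \<partial>lborel) = 0"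
    using exhaust_3[of i] gi by (elim disjE) simp_all
  then have "(\<integral>\<^sup>+z. ennreal (g 1 (z$1) * g 2 (z$2) * g 3 (z$3)) \<partial>(lborel::(real^3) measure)) = 0"
    by (subst nn_prod3) (simp_all add: gn)
  moreover have "(\<lambda>z::real^3. ennreal (g 1 (z$1) * g 2 (z$2) * g 3 (z$3))) = indicator {z. z$i = 0}"
  proof
    fix z :: "real^3"
    show "ennreal (g 1 (z$1) * g 2 (z$2) * g 3 (z$3)) = indicator {z. z$i = 0} z"
      using exhaust_3[of i] by (elim disjE) (simp_all add: g_def indicator_def)
  qed
  ultimately have "emeasure lborel {z::real^3. z$i = 0} = 0"
    by (subst nn_integral_indicator[symmetric]) auto
  then show ?thesis
    by (intro AE_I'[where N="{z::real^3. z$i = 0}"]) auto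
qed

definition box3 :: "real \<Rightarrow> real \<Rightarrow> real \<Rightarrow> (real^3) set" where
  "box3 A1 A2 A3 = {z. \<bar>z$1\<bar> \<le> A1 \<and> \<bar>z$2\<bar> \<le> A2 \<and> \<bar>z$3\<bar> \<le> A3}"

lemma indicator_box3: "indicator (box3 A1 A2 A3) z = indicator {-A1..A1} (z$1) * indicator {-A2..A2} (z$2) * (indicator {-A3..A3} (z$3) :: real)"
  by (auto simp: box3_def indicator_def abs_le_iff)

definition I1 :: "real \<Rightarrow> real \<Rightarrow> real \<Rightarrow> real" where
  "I1 p w A = w powr p * (2 * (A powr (p+1) / (p+1)))"

lemma box_nn_bound:
  fixes L :: "real^3 \<Rightarrow> real"
  assumes [measurable]: "L \<in> borel_measurable borel"
  assumes A: "A1 \<ge> 0" "A2 \<ge> 0" "A3 \<ge> 0" and w: "w1 > 0" "w2 > 0" "w3 > 0" and p: "p > -1" and C: "C \<ge> 0"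
  assumes bd: "\<And>z. z$1 \<noteq> 0 \<Longrightarrow> z$2 \<noteq> 0 \<Longrightarrow> z$3 \<noteq> 0 \<Longrightarrow>
      \<bar>L z\<bar> \<le> C * ((w1*\<bar>z$1\<bar>) powr p * (w2*\<bar>z$2\<bar>) powr p * (w3*\<bar>z$3\<bar>) powr p)"
  shows "(\<integral>\<^sup>+z. ennreal (\<bar>L z\<bar> * indicator (box3 A1 A2 A3) z) \<partial>lborel) \<le> ennreal (C * (I1 p w1 A1 * I1 p w2 A2 * I1 p w3 A3))"
proof -
  define g where "g A w u = indicator {-A..A} u * (w * \<bar>u\<bar>) powr p" for A w u :: real
  have [measurable]: "g A w \<in> borel_measurable borel" for A w unfolding g_def by measurable
  have gn: "0 \<le> g A w u" for A w u by (simp add: g_def)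
  have "AE z in (lborel::(real^3) measure). z$1 \<noteq> 0 \<and> z$2 \<noteq> 0 \<and> z$3 \<noteq> 0"
    using hyper_null[of 1] hyper_null[of 2] hyper_null[of 3] by eventually_elim auto
  then have "(\<integral>\<^sup>+z. ennreal (\<bar>L z\<bar> * indicator (box3 A1 A2 A3) z) \<partial>lborel)
      \<le> (\<integral>\<^sup>+(z::real^3). ennreal C * ennreal (g A1 w1 (z$1) * g A2 w2 (z$2) * g A3 w3 (z$3)) \<partial>lborel)"
  proof (rule nn_integral_mono_AE[OF AE_mp], intro AE_I2 impI)
    fix z :: "real^3" assume z: "z$1 \<noteq> 0 \<and> z$2 \<noteq> 0 \<and> z$3 \<noteq> 0"
    have "\<bar>L z\<bar> * indicator (box3 A1 A2 A3) z \<le> C * ((w1*\<bar>z$1\<bar>) powr p * (w2*\<bar>z$2\<bar>) powr p * (w3*\<bar>z$3\<bar>) powr p) * indicator (box3 A1 A2 A3) z"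
      using bd z by (intro mult_right_mono) auto
    also have "\<dots> = C * (g A1 w1 (z$1) * g A2 w2 (z$2) * g A3 w3 (z$3))"
      unfolding indicator_box3 g_def by (simp add: ac_simps)
    finally show "ennreal (\<bar>L z\<bar> * indicator (box3 A1 A2 A3) z) \<le> ennreal C * ennreal (g A1 w1 (z$1) * g A2 w2 (z$2) * g A3 w3 (z$3))"
      using C gn by (simp add: ennreal_mult'[symmetric] ennreal_leI)
  qed
  also have "\<dots> = ennreal C * ((\<integral>\<^sup>+u. g A1 w1 u \<partial>lborel) * (\<integral>\<^sup>+u. g A2 w2 u \<partial>lborel) * (\<integral>\<^sup>+u. g A3 w3 u \<partial>lborel))"
  proof -
    have e1: "(\<integral>\<^sup>+(z::real^3). ennreal (g A1 w1 (z$1) * g A2 w2 (z$2) * g A3 w3 (z$3)) \<partial>lborel) = (\<integral>\<^sup>+u. g A1 w1 u \<partial>lborel) * (\<integral>\<^sup>+u. g A2 w2 u \<partial>lborel) * (\<integral>\<^sup>+u. g A3 w3 u \<partial>lborel)"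
      by (rule nn_prod3) (simp_all add: gn)
    show ?thesis by (subst nn_integral_cmult) (simp_all add: e1)
  qed
  also have "\<dots> = ennreal (C * (I1 p w1 A1 * I1 p w2 A2 * I1 p w3 A3))"
  proof -
    have i: "(\<integral>\<^sup>+u. g A w u \<partial>lborel) = ennreal (I1 p w A)" if "A \<ge> 0" "w > 0" for A w
      unfolding g_def I1_def using nn_1d[OF that(1) p that(2)] .
    have n: "I1 p w A \<ge> 0" if "A \<ge> 0" "w > 0" for A w
      unfolding I1_def using p that by simp
    show ?thesis using A w C n
      by (simp add: i ennreal_mult[symmetric])
  qed
  finally show ?thesis .
qed



definition Qf :: "real \<Rightarrow> real \<Rightarrow> real^3 \<Rightarrow> real" where
  "Qf a b z = a * (z$1)^2 + b * ((z$2)^2 + (z$3)^2)"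
definition Kf :: "real \<Rightarrow> real \<Rightarrow> real \<Rightarrow> real^3 \<Rightarrow> real" where
  "Kf a b c z = c / sqrt (Qf a b z)"
definition wt :: "real \<Rightarrow> real \<Rightarrow> 3 \<Rightarrow> real" where
  "wt a b j = (if j = 1 then a else b)"
definition dKf :: "real \<Rightarrow> real \<Rightarrow> real \<Rightarrow> 3 \<Rightarrow> real^3 \<Rightarrow> real" where
  "dKf a b c j z = - (c * wt a b j * z$j) / (Qf a b z * sqrt (Qf a b z))"

lemma inv_sum_sq_le:
  fixes X Y W :: real
  assumes "X > 0" "Y > 0" "W > 0"
  shows "1 / (X^2 + Y^2 + W^2) \<le> X powr (-2/3) * Y powr (-2/3) * W powr (-2/3)"
proof -
  define m where "m = max X (max Y W)"
  have m: "m > 0" "X \<le> m" "Y \<le> m" "W \<le> m" using assms by (auto simp: m_def)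
  have "X * Y * W \<le> m * m * m" using assms m by (intro mult_mono) auto
  then have "(X * Y * W) powr (2/3) \<le> (m * m * m) powr (2/3)"
    using assms by (intro powr_mono2) auto
  also have "(m * m * m) powr (2/3) = m^2"
  proof -
    have "(m * m * m) powr (2/3) = (m powr 3) powr (2/3)"
      using m by (simp add: powr_numeral power3_eq_cube)
    also have "\<dots> = m powr 2" by (simp add: powr_powr)
    finally show ?thesis using m by (simp add: powr_numeral)
  qed
  also have "m^2 \<le> X^2 + Y^2 + W^2"
    unfolding m_def using assms by (auto simp: max_def)
  finally have le: "(X * Y * W) powr (2/3) \<le> X^2 + Y^2 + W^2" .
  have pos: "(X * Y * W) powr (2/3) > 0" using assms by simp
  have "1 / (X^2 + Y^2 + W^2) \<le> 1 / (X * Y * W) powr (2/3)"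
    using le pos assms by (intro divide_left_mono mult_pos_pos) (auto simp: add_pos_pos)
  also have "\<dots> = (X * Y * W) powr (-2/3)"
    by (simp add: powr_minus_divide)
  also have "\<dots> = X powr (-2/3) * Y powr (-2/3) * W powr (-2/3)"
    using assms by (simp add: powr_mult)
  finally show ?thesis .
qed

lemma Qf_eq:
  assumes "a > 0" "b > 0"
  shows "Qf a b z = (sqrt a * \<bar>z$1\<bar>)^2 + (sqrt b * \<bar>z$2\<bar>)^2 + (sqrt b * \<bar>z$3\<bar>)^2"
  using assms by (simp add: Qf_def power_mult_distrib distrib_left)

lemma dKf_bound:
  assumes ab: "a > 0" "b > 0" "c > 0" and z: "z$1 \<noteq> 0" "z$2 \<noteq> 0" "z$3 \<noteq> 0"
  shows "\<bar>dKf a b c j z\<bar> \<le> c * sqrt (wt a b j) *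
     ((sqrt a * \<bar>z$1\<bar>) powr (-2/3) * (sqrt b * \<bar>z$2\<bar>) powr (-2/3) * (sqrt b * \<bar>z$3\<bar>) powr (-2/3))"
proof -
  define Q where "Q = Qf a b z"
  have Qpos: "Q > 0" using ab z by (simp add: Q_def Qf_def add_pos_pos)
  have wpos: "wt a b j > 0" using ab by (simp add: wt_def)
  have "wt a b j * (z$j)^2 \<le> Q"
  proof -
    have "0 \<le> a * (z$1)^2" "0 \<le> b * (z$2)^2" "0 \<le> b * (z$3)^2" using ab by auto
    then show ?thesis using exhaust_3[of j] by (auto simp: Q_def Qf_def wt_def distrib_left)
  qed
  then have "sqrt (wt a b j * (z$j)^2) \<le> sqrt Q" by simp
  then have zj: "sqrt (wt a b j) * \<bar>z$j\<bar> \<le> sqrt Q" using wpos by (simp add: real_sqrt_mult)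
  have "\<bar>dKf a b c j z\<bar> = c * sqrt (wt a b j) * (sqrt (wt a b j) * \<bar>z$j\<bar>) / (Q * sqrt Q)"
    using ab wpos Qpos unfolding dKf_def Q_def[symmetric]
    by (simp add: abs_mult abs_divide)
  also have "\<dots> \<le> c * sqrt (wt a b j) * sqrt Q / (Q * sqrt Q)"
    using zj ab wpos Qpos by (intro divide_right_mono mult_left_mono) auto
  also have "\<dots> = c * sqrt (wt a b j) * (1 / Q)" using Qpos by simp
  also have "\<dots> \<le> c * sqrt (wt a b j) * ((sqrt a * \<bar>z$1\<bar>) powr (-2/3) * (sqrt b * \<bar>z$2\<bar>) powr (-2/3) * (sqrt b * \<bar>z$3\<bar>) powr (-2/3))"
    unfolding Q_def Qf_eq[OF ab(1,2)]
    using ab wpos z by (intro mult_left_mono inv_sum_sq_le) auto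
  finally show ?thesis .
qed

lemma Kf_bound:
  assumes ab: "a > 0" "b > 0" "c > 0" and z: "z$1 \<noteq> 0" "z$2 \<noteq> 0" "z$3 \<noteq> 0"
  shows "\<bar>Kf a b c z\<bar> \<le> c *
     ((sqrt a * \<bar>z$1\<bar>) powr (-1/3) * (sqrt b * \<bar>z$2\<bar>) powr (-1/3) * (sqrt b * \<bar>z$3\<bar>) powr (-1/3))"
proof -
  define X Y W where "X = sqrt a * \<bar>z$1\<bar>" "Y = sqrt b * \<bar>z$2\<bar>" "W = sqrt b * \<bar>z$3\<bar>"
  have pos: "X > 0" "Y > 0" "W > 0" using ab z by (auto simp: X_Y_W_def)
  have Q: "Qf a b z = X^2 + Y^2 + W^2" using Qf_eq[OF ab(1,2)] by (simp add: X_Y_W_def)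
  have Qpos: "X^2 + Y^2 + W^2 > 0" using pos by (simp add: add_pos_pos)
  have "\<bar>Kf a b c z\<bar> = c * sqrt (1 / (X^2 + Y^2 + W^2))"
    using ab Qpos by (simp add: Kf_def Q real_sqrt_divide)
  also have "\<dots> \<le> c * sqrt (X powr (-2/3) * Y powr (-2/3) * W powr (-2/3))"
    using ab inv_sum_sq_le[OF pos] by (intro mult_left_mono real_sqrt_le_mono) auto
  also have "sqrt (X powr (-2/3) * Y powr (-2/3) * W powr (-2/3)) = X powr (-1/3) * Y powr (-1/3) * W powr (-1/3)"
  proof -
    have "sqrt (X powr (-2/3) * Y powr (-2/3) * W powr (-2/3)) = (X powr (-2/3) * Y powr (-2/3) * W powr (-2/3)) powr (1/2)"
      by (simp add: powr_half_sqrt)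
    also have "\<dots> = X powr (-1/3) * Y powr (-1/3) * W powr (-1/3)"
      using pos by (simp add: powr_mult powr_powr)
    finally show ?thesis .
  qed
  finally show ?thesis by (simp add: X_Y_W_def)
qed



lemma dKf_meas[measurable]: "dKf a b c j \<in> borel_measurable borel"
  unfolding dKf_def Qf_def by measurable
lemma Kf_meas[measurable]: "Kf a b c \<in> borel_measurable borel"
  unfolding Kf_def Qf_def by measurable

lemma dKf_box:
  assumes ab: "a > 0" "b > 0" "c > 0" and A: "A1 \<ge> 0" "A2 \<ge> 0" "A3 \<ge> 0"
  shows "(\<integral>\<^sup>+z. ennreal (\<bar>dKf a b c j z\<bar> * indicator (box3 A1 A2 A3) z) \<partial>lborel)
     \<le> ennreal (c * sqrt (wt a b j) * (I1 (-2/3) (sqrt a) A1 * I1 (-2/3) (sqrt b) A2 * I1 (-2/3) (sqrt b) A3))"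
  by (rule box_nn_bound) (use ab A dKf_bound[OF ab] in \<open>auto simp: wt_def\<close>)

lemma Kf_box:
  assumes ab: "a > 0" "b > 0" "c > 0" and A: "A1 \<ge> 0" "A2 \<ge> 0" "A3 \<ge> 0"
  shows "(\<integral>\<^sup>+z. ennreal (\<bar>Kf a b c z\<bar> * indicator (box3 A1 A2 A3) z) \<partial>lborel)
     \<le> ennreal (c * (I1 (-1/3) (sqrt a) A1 * I1 (-1/3) (sqrt b) A2 * I1 (-1/3) (sqrt b) A3))"
  by (rule box_nn_bound) (use ab A Kf_bound[OF ab] in auto)

definition locint :: "(real^3 \<Rightarrow> real) \<Rightarrow> bool" where
  "locint L \<longleftrightarrow> L \<in> borel_measurable borel \<and> (\<forall>r. integrable lborel (\<lambda>z. L z * indicator (cball 0 r) z))"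

lemma cball_box3: "indicator (cball 0 r) z \<le> (indicator (box3 r r r) z :: real)"
proof -
  have "z \<in> cball 0 r \<Longrightarrow> z \<in> box3 r r r"
    using component_le_norm_cart[of z] by (auto simp: box3_def mem_cball_0 intro: order_trans)
  then show ?thesis by (auto simp: indicator_def)
qed

lemma locintI:
  assumes [measurable]: "L \<in> borel_measurable borel"
  assumes fin: "\<And>r. r \<ge> 0 \<Longrightarrow> (\<integral>\<^sup>+z. ennreal (\<bar>L z\<bar> * indicator (box3 r r r) z) \<partial>lborel) < \<infinity>"
  shows "locint L"
  unfolding locint_def
proof (intro conjI allI)
  fix r :: real
  show "integrable lborel (\<lambda>z. L z * indicator (cball 0 r) z)"
  proof (cases "r \<ge> 0")
    case False
    then have "cball (0::real^3) r = {}" by auto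
    then show ?thesis by simp
  next
    case True
    have "(\<integral>\<^sup>+z. ennreal (norm (L z * indicator (cball 0 r) z)) \<partial>lborel) \<le> (\<integral>\<^sup>+z. ennreal (\<bar>L z\<bar> * indicator (box3 r r r) z) \<partial>lborel)"
      by (intro nn_integral_mono ennreal_leI) (auto simp: abs_mult intro!: mult_left_mono cball_box3)
    then show ?thesis using fin[OF True]
      by (intro integrableI_bounded) (auto intro!: borel_measurable_times borel_measurable_indicator)
  qed
qed (fact assms)

lemma locint_dKf: "a > 0 \<Longrightarrow> b > 0 \<Longrightarrow> c > 0 \<Longrightarrow> locint (dKf a b c j)"
  by (rule locintI) (auto intro!: le_less_trans[OF dKf_box])

lemma locint_Kf: "a > 0 \<Longrightarrow> b > 0 \<Longrightarrow> c > 0 \<Longrightarrow> locint (Kf a b c)"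
  by (rule locintI) (auto intro!: le_less_trans[OF Kf_box])



definition conv :: "(real^3 \<Rightarrow> real) \<Rightarrow> (real^3 \<Rightarrow> real) \<Rightarrow> real^3 \<Rightarrow> real" where
  "conv L f y = (LINT z|lborel. f (y - z) * L z)"

lemma locint_meas: "locint L \<Longrightarrow> L \<in> borel_measurable borel"
  by (simp add: locint_def)

lemma conv_integrable:
  fixes L f :: "real^3 \<Rightarrow> real"
  assumes L: "locint L" and fm: "f \<in> borel_measurable borel"
    and fb: "\<And>x. \<bar>f x\<bar> \<le> B" and supp: "\<And>x. f x \<noteq> 0 \<Longrightarrow> norm x \<le> R"
  shows "integrable lborel (\<lambda>z. f (x - z) * L z)"
proof -
  have [measurable]: "L \<in> borel_measurable borel" "f \<in> borel_measurable borel" using L fm by (auto simp: locint_def)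
  have i: "integrable lborel (\<lambda>z. L z * indicator (cball 0 (norm x + R)) z)" using L by (simp add: locint_def)
  show ?thesis
  proof (rule Bochner_Integration.integrable_bound[OF integrable_mult_right[OF integrable_abs[OF i], of B]])
    show "(\<lambda>z. f (x - z) * L z) \<in> borel_measurable lborel" by measurable
    show "AE z in lborel. norm (f (x - z) * L z) \<le> norm (B * \<bar>L z * indicator (cball 0 (norm x + R)) z\<bar>)"
    proof (intro AE_I2)
      fix z :: "real^3"
      show "norm (f (x - z) * L z) \<le> norm (B * \<bar>L z * indicator (cball 0 (norm x + R)) z\<bar>)"
      proof (cases "f (x - z) = 0")
        case True then show ?thesis by simp
      next
        case False
        then have "norm (x - z) \<le> R" using supp by blast
        then have "norm z \<le> norm x + R" using norm_triangle_ineq4[of x z] norm_minus_commute[of x z]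
          by (smt (verit) norm_triangle_sub)
        then have "z \<in> cball 0 (norm x + R)" by (simp add: mem_cball_0)
        moreover have "\<bar>f (x - z)\<bar> \<le> B" by (rule fb)
        moreover have "0 \<le> B" using fb[of 0] by linarith
        ultimately show ?thesis by (simp add: abs_mult mult_right_mono)
      qed
    qed
  qed
qed



lemma line_deriv:
  fixes e w :: "real^3"
  assumes fd: "\<And>x. ((\<lambda>t. f (x + t *\<^sub>R e)) has_real_derivative f' x) (at 0)"
  shows "((\<lambda>t. f (w + t *\<^sub>R e)) has_real_derivative f' (w + \<tau> *\<^sub>R e)) (at \<tau>)"
proof -
  have "((\<lambda>t. f ((w + \<tau> *\<^sub>R e) + t *\<^sub>R e)) has_real_derivative f' (w + \<tau> *\<^sub>R e)) (at 0)" by (rule fd)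
  moreover have "(\<lambda>t. f (w + \<tau> *\<^sub>R e + t *\<^sub>R e)) = (\<lambda>t. f (w + (t + \<tau>) *\<^sub>R e))"
    by (rule ext) (simp add: scaleR_add_left add_ac)
  ultimately have "((\<lambda>t. f (w + (t + \<tau>) *\<^sub>R e)) has_real_derivative f' (w + \<tau> *\<^sub>R e)) (at 0)"
    by simp
  then show ?thesis using DERIV_shift[of "\<lambda>t. f (w + t *\<^sub>R e)" "f' (w + \<tau> *\<^sub>R e)" 0 \<tau>] by simp
qed

lemma line_lipschitz:
  fixes e w :: "real^3"
  assumes fd: "\<And>x. ((\<lambda>t. f (x + t *\<^sub>R e)) has_real_derivative f' x) (at 0)"
    and f'b: "\<And>x. \<bar>f' x\<bar> \<le> M"
  shows "\<bar>f (w + t *\<^sub>R e) - f w\<bar> \<le> M * \<bar>t\<bar>"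
proof -
  have "norm ((\<lambda>t. f (w + t *\<^sub>R e)) t - (\<lambda>t. f (w + t *\<^sub>R e)) 0) \<le> M * norm (t - 0)"
  proof (rule field_differentiable_bound[where S=UNIV and f'="\<lambda>\<tau>. f' (w + \<tau> *\<^sub>R e)"])
    show "((\<lambda>t. f (w + t *\<^sub>R e)) has_field_derivative f' (w + z *\<^sub>R e)) (at z within UNIV)" for z
      using line_deriv[OF fd] by simp
  qed (use f'b in auto)
  then show ?thesis by (simp only: scaleR_zero_left add_0_right real_norm_def diff_zero)
qed

lemma convA:
  fixes L f f' :: "real^3 \<Rightarrow> real" and e y :: "real^3"
  assumes L: "locint L"
    and fm: "f \<in> borel_measurable borel" and f'm: "f' \<in> borel_measurable borel"
    and fd: "\<And>x. ((\<lambda>t. f (x + t *\<^sub>R e)) has_real_derivative f' x) (at 0)"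
    and fb: "\<And>x. \<bar>f x\<bar> \<le> B" and f'b: "\<And>x. \<bar>f' x\<bar> \<le> M"
    and supp: "\<And>x. f x \<noteq> 0 \<Longrightarrow> norm x \<le> R"
    and e: "norm e = 1"
  shows "((\<lambda>t. conv L f (y + t *\<^sub>R e)) has_real_derivative conv L f' y) (at 0)"
proof -
  have [measurable]: "L \<in> borel_measurable borel" "f \<in> borel_measurable borel" "f' \<in> borel_measurable borel"
    using L fm f'm by (auto simp: locint_def)
  have B0: "0 \<le> B" using fb[of 0] by linarith
  have M0: "0 \<le> M" using f'b[of 0] by linarith
  define R0 where "R0 = max R 0"
  have supp0: "norm x \<le> R0" if "f x \<noteq> 0" for x using supp[OF that] by (simp add: R0_def)
  have R00: "R0 \<ge> 0" by (simp add: R0_def)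
  let ?F = "\<lambda>t. conv L f (y + t *\<^sub>R e)"
  have int: "integrable lborel (\<lambda>z. f (x - z) * L z)" for x
    by (rule conv_integrable[OF L fm fb supp])
  show ?thesis
    unfolding DERIV_def
  proof (subst tendsto_at_iff_sequentially, intro allI impI)
    fix X :: "nat \<Rightarrow> real"
    assume X0: "\<forall>i. X i \<in> UNIV - {0}" and Xl: "X \<longlonglongrightarrow> 0"
    obtain T where T: "T > 0" "\<And>i. norm (X i) \<le> T"
      using convergent_imp_Bseq[OF convergentI[OF Xl]] by (auto elim!: BseqE)
    define r where "r = norm y + T + R0"
    define s where "s i z = (f (y + X i *\<^sub>R e - z) - f (y - z)) / X i * L z" for i z
    have eq: "((\<lambda>h. (?F (0 + h) - ?F 0) / h) \<circ> X) i = (LINT z|lborel. s i z)" for i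
    proof -
      have "(LINT z|lborel. s i z) = (LINT z|lborel. (f (y + X i *\<^sub>R e - z) * L z - f (y - z) * L z) / X i)"
        unfolding s_def by (simp add: algebra_simps)
      also have "\<dots> = ((LINT z|lborel. f (y + X i *\<^sub>R e - z) * L z) - (LINT z|lborel. f (y - z) * L z)) / X i"
        by (simp add: int)
      finally show ?thesis by (simp add: conv_def)
    qed
    have Wi: "integrable lborel (\<lambda>z. (M + 2 * B) * \<bar>L z * indicator (cball 0 r) z\<bar>)"
      using L by (intro integrable_mult_right integrable_abs) (simp add: locint_def)
    have lim: "(\<lambda>i. LINT z|lborel. s i z) \<longlonglongrightarrow> (LINT z|lborel. f' (y - z) * L z)"
    proof (rule integral_dominated_convergence[OF _ _ Wi])
      show "(\<lambda>z. f' (y - z) * L z) \<in> borel_measurable lborel" by measurable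
      show "s i \<in> borel_measurable lborel" for i unfolding s_def by measurable
      show "AE z in lborel. (\<lambda>i. s i z) \<longlonglongrightarrow> f' (y - z) * L z"
      proof (intro AE_I2)
        fix z :: "real^3"
        have d: "((\<lambda>h. (f ((y - z) + (0 + h) *\<^sub>R e) - f ((y - z) + 0 *\<^sub>R e)) / h) \<longlongrightarrow> f' (y - z)) (at 0)"
          using fd[of "y - z"] unfolding DERIV_def .
        have Xf: "filterlim X (at 0) sequentially"
          using X0 Xl by (auto simp: filterlim_at)
        have "(\<lambda>i. (f ((y - z) + (0 + X i) *\<^sub>R e) - f ((y - z) + 0 *\<^sub>R e)) / X i) \<longlonglongrightarrow> f' (y - z)"
          by (rule filterlim_compose[OF d Xf])
        then have "(\<lambda>i. (f (y + X i *\<^sub>R e - z) - f (y - z)) / X i) \<longlonglongrightarrow> f' (y - z)"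
          by (simp add: algebra_simps)
        then show "(\<lambda>i. s i z) \<longlonglongrightarrow> f' (y - z) * L z"
          unfolding s_def by (intro tendsto_mult_right)
      qed
      show "AE z in lborel. norm (s i z) \<le> (M + 2 * B) * \<bar>L z * indicator (cball 0 r) z\<bar>" for i
      proof (intro AE_I2)
        fix z :: "real^3"
        show "norm (s i z) \<le> (M + 2 * B) * \<bar>L z * indicator (cball 0 r) z\<bar>"
        proof (cases "norm z \<le> r")
          case False
          have n1: "f (y - z) = 0"
          proof (rule ccontr)
            assume "f (y - z) \<noteq> 0"
            then have "norm (y - z) \<le> R0" by (rule supp0)
            then show False using False T norm_triangle_sub[of z y] norm_minus_commute[of y z]
              unfolding r_def by (smt (verit) norm_ge_zero)
          qed
          have n2: "f (y + X i *\<^sub>R e - z) = 0"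
          proof (rule ccontr)
            assume "f (y + X i *\<^sub>R e - z) \<noteq> 0"
            then have a: "norm (y + X i *\<^sub>R e - z) \<le> R0" by (rule supp0)
            have "norm z \<le> norm (y + X i *\<^sub>R e - z) + norm (y + X i *\<^sub>R e)"
              using norm_triangle_sub[of z "y + X i *\<^sub>R e"] norm_minus_commute[of "y + X i *\<^sub>R e" z] by simp
            also have "norm (y + X i *\<^sub>R e) \<le> norm y + \<bar>X i\<bar>"
              using norm_triangle_ineq[of y "X i *\<^sub>R e"] e by simp
            finally show False using a T(2)[of i] False unfolding r_def by simp
          qed
          show ?thesis using n1 n2 M0 B0 by (simp add: s_def)
        next
          case True
          have "\<bar>(f (y + X i *\<^sub>R e - z) - f (y - z)) / X i\<bar> \<le> M + 2 * B"
          proof (cases "\<bar>X i\<bar> \<le> 1")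
            case True
            have "\<bar>f ((y - z) + X i *\<^sub>R e) - f (y - z)\<bar> \<le> M * \<bar>X i\<bar>"
              by (rule line_lipschitz[OF fd f'b])
            then have "\<bar>f (y + X i *\<^sub>R e - z) - f (y - z)\<bar> \<le> M * \<bar>X i\<bar>" by (simp add: algebra_simps)
            then have "\<bar>(f (y + X i *\<^sub>R e - z) - f (y - z)) / X i\<bar> \<le> M"
              using X0 by (simp add: abs_divide divide_le_eq)
            then show ?thesis using B0 by simp
          next
            case False
            have "\<bar>f (y + X i *\<^sub>R e - z) - f (y - z)\<bar> \<le> 2 * B"
              using fb[of "y + X i *\<^sub>R e - z"] fb[of "y - z"] by simp
            also have "\<dots> \<le> 2 * B * \<bar>X i\<bar>" using False B0 mult_left_mono[of 1 "\<bar>X i\<bar>" "2 * B"] by simp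
            finally have "\<bar>(f (y + X i *\<^sub>R e - z) - f (y - z)) / X i\<bar> \<le> 2 * B"
              using False by (simp add: abs_divide divide_le_eq)
            then show ?thesis using M0 by simp
          qed
          then have "\<bar>(f (y + X i *\<^sub>R e - z) - f (y - z)) / X i\<bar> * \<bar>L z\<bar> \<le> (M + 2 * B) * \<bar>L z\<bar>"
            by (rule mult_right_mono) simp
          then show ?thesis using True by (simp add: s_def abs_mult mem_cball_0)
        qed
      qed
    qed
    then have lim2: "(\<lambda>i. LINT z|lborel. s i z) \<longlonglongrightarrow> conv L f' y"
      by (simp only: conv_def)
    have feq: "((\<lambda>h. (?F (0 + h) - ?F 0) / h) \<circ> X) = (\<lambda>i. LINT z|lborel. s i z)"
      by (rule ext) (rule eq)
    show "((\<lambda>h. (?F (0 + h) - ?F 0) / h) \<circ> X) \<longlonglongrightarrow> conv L f' y"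
      unfolding feq by (rule lim2)
  qed
qed



lemma integrable_translate:
  fixes g :: "'a::euclidean_space \<Rightarrow> real"
  assumes "g \<in> borel_measurable borel" "integrable lborel g"
  shows "integrable lborel (\<lambda>x. g (t + x))"
  using integrable_distr_eq[of "\<lambda>x. t + x" lborel borel g] assms lborel_translate[of t] by auto

lemma convB:
  fixes K dK f f' :: "real^3 \<Rightarrow> real" and e y :: "real^3"
  assumes K: "locint K" and dK: "locint dK"
    and Kd: "AE w in lborel. (\<forall>\<tau>. ((\<lambda>u. K (w + u *\<^sub>R e)) has_real_derivative dK (w + \<tau> *\<^sub>R e)) (at \<tau>))
               \<and> continuous_on UNIV (\<lambda>\<tau>. dK (w + \<tau> *\<^sub>R e))"
    and fc: "continuous_on UNIV f" and f'm: "f' \<in> borel_measurable borel"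
    and fd: "\<And>x. ((\<lambda>t. f (x + t *\<^sub>R e)) has_real_derivative f' x) (at 0)"
    and fb: "\<And>x. \<bar>f x\<bar> \<le> B" and f'b: "\<And>x. \<bar>f' x\<bar> \<le> M"
    and supp: "\<And>x. f x \<noteq> 0 \<Longrightarrow> norm x \<le> R"
    and e: "norm e = 1"
  shows "conv K f' y = conv dK f y"
proof -
  have fm[measurable]: "f \<in> borel_measurable borel" using fc by (rule borel_measurable_continuous_onI)
  have [measurable]: "K \<in> borel_measurable borel" "dK \<in> borel_measurable borel" "f' \<in> borel_measurable borel"
    using K dK f'm by (auto simp: locint_def)
  have B0: "0 \<le> B" using fb[of 0] by linarith
  define R0 where "R0 = max R 0"
  have supp0: "norm x \<le> R0" if "f x \<noteq> 0" for x using supp[OF that] by (simp add: R0_def)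
  have R00: "R0 \<ge> 0" by (simp add: R0_def)
  define G where "G t = conv K f (y + t *\<^sub>R e)" for t
  define H where "H t = conv dK f (y + t *\<^sub>R e)" for t
  have dG: "(G has_real_derivative conv K f' y) (at 0)"
    unfolding G_def by (rule convA[OF K fm f'm fd fb f'b supp e])
  have Hcont: "continuous_on UNIV H"
  proof -
    have "isCont H \<tau>" for \<tau>
    proof -
      have "((\<lambda>t. conv dK f ((y + \<tau> *\<^sub>R e) + t *\<^sub>R e)) has_real_derivative conv dK f' (y + \<tau> *\<^sub>R e)) (at 0)"
        by (rule convA[OF dK fm f'm fd fb f'b supp e])
      moreover have "(\<lambda>t. conv dK f ((y + \<tau> *\<^sub>R e) + t *\<^sub>R e)) = (\<lambda>t. H (t + \<tau>))"
        by (rule ext) (simp add: H_def scaleR_add_left add_ac)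
      ultimately have "((\<lambda>t. H (t + \<tau>)) has_real_derivative conv dK f' (y + \<tau> *\<^sub>R e)) (at 0)" by simp
      then have "(H has_real_derivative conv dK f' (y + \<tau> *\<^sub>R e)) (at (0 + \<tau>))"
        by (subst DERIV_shift) simp
      then show ?thesis by (intro DERIV_isCont) simp
    qed
    then show ?thesis by (simp add: continuous_on_eq_continuous_at)
  qed
  have transl: "(LINT z|lborel. f (x - z) * L z) = (LINT w|lborel. f (x - t *\<^sub>R e - w) * L (w + t *\<^sub>R e))"
    if [measurable]: "L \<in> borel_measurable borel" for L x t
  proof -
    have "(LINT z|lborel. f (x - z) * L z) = (LINT w|lborel. f (x - (t *\<^sub>R e + w)) * L (t *\<^sub>R e + w))"
      by (rule integral_translate) measurable
    also have "\<dots> = (LINT w|lborel. f (x - t *\<^sub>R e - w) * L (w + t *\<^sub>R e))"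
      by (simp add: algebra_simps)
    finally show ?thesis .
  qed
  have Gt: "G t = (LINT w|lborel. f (y - w) * K (w + t *\<^sub>R e))" for t
    unfolding G_def conv_def by (subst transl[of K _ t]) simp_all
  have Ht: "H t = (LINT w|lborel. f (y - w) * dK (w + t *\<^sub>R e))" for t
    unfolding H_def conv_def by (subst transl[of dK _ t]) simp_all
  have intK: "integrable lborel (\<lambda>w. f (y - w) * K (w + t *\<^sub>R e))" for t
  proof -
    have "integrable lborel (\<lambda>z. f ((y + t *\<^sub>R e) - z) * K z)" by (rule conv_integrable[OF K fm fb supp])
    then have "integrable lborel (\<lambda>w. f ((y + t *\<^sub>R e) - (t *\<^sub>R e + w)) * K (t *\<^sub>R e + w))"
      by (intro integrable_translate) measurable
    moreover have "(\<lambda>w. f ((y + t *\<^sub>R e) - (t *\<^sub>R e + w)) * K (t *\<^sub>R e + w)) = (\<lambda>w. f (y - w) * K (w + t *\<^sub>R e))"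
      by (rule ext) (simp add: algebra_simps)
    ultimately show ?thesis by simp
  qed
  have claim: "G t - G 0 = (LINT \<tau>|lborel. indicator {0..t} \<tau> * H \<tau>)" if t0: "t \<ge> 0" for t
  proof -
    define r where "r = norm y + R0 + t"
    have cbm[measurable]: "cball (0::real^3) r \<in> sets borel" by simp
    define P where "P \<tau> w = indicator {0..t} \<tau> * (f (y - w) * dK (w + \<tau> *\<^sub>R e))" for \<tau> w
    have Pm[measurable]: "(\<lambda>p. P (fst p) (snd p)) \<in> borel_measurable (lborel \<Otimes>\<^sub>M lborel)"
      unfolding P_def by measurable
    have Pm2[measurable]: "(\<lambda>p. P (snd p) (fst p)) \<in> borel_measurable (lborel \<Otimes>\<^sub>M lborel)"
      unfolding P_def by measurable
    have Pint: "integrable (lborel \<Otimes>\<^sub>M lborel) (case_prod P)"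
    proof (rule integrableI_bounded)
      show cPm: "case_prod P \<in> borel_measurable (lborel \<Otimes>\<^sub>M lborel)" using Pm by (simp add: case_prod_unfold)
      define J where "J = (\<integral>\<^sup>+u. ennreal (\<bar>dK u\<bar> * indicator (cball 0 r) u) \<partial>lborel)"
      have J: "J < \<infinity>"
      proof -
        have "integrable lborel (\<lambda>z. dK z * indicator (cball 0 r) z)" using dK by (simp add: locint_def)
        then have "(\<integral>\<^sup>+u. ennreal (norm (dK u * indicator (cball 0 r) u)) \<partial>lborel) < \<infinity>"
          by (simp add: integrable_iff_bounded)
        moreover have "norm (dK u * indicator (cball 0 r) u) = \<bar>dK u\<bar> * indicator (cball 0 r) u" for u
          by (simp add: abs_mult)
        ultimately show ?thesis by (simp add: J_def)
      qed
      have inner: "(\<integral>\<^sup>+w. ennreal (norm (P \<tau> w)) \<partial>lborel) \<le> ennreal B * J * indicator {0..t} \<tau>" for \<tau>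
      proof (cases "\<tau> \<in> {0..t}")
        case False then show ?thesis by (simp add: P_def)
      next
        case True
        have pw: "ennreal (norm (P \<tau> w)) \<le> ennreal B * ennreal (\<bar>dK (\<tau> *\<^sub>R e + w)\<bar> * indicator (cball 0 r) (\<tau> *\<^sub>R e + w))" for w
        proof -
          have "norm (P \<tau> w) \<le> B * (\<bar>dK (\<tau> *\<^sub>R e + w)\<bar> * indicator (cball 0 r) (\<tau> *\<^sub>R e + w))"
          proof (cases "f (y - w) = 0")
            case True then show ?thesis using B0 by (simp add: P_def)
          next
            case False
            then have "norm (y - w) \<le> R0" by (rule supp0)
            then have "norm w \<le> norm y + R0" using norm_triangle_sub[of w y] norm_minus_commute[of y w] by simp
            moreover have "norm (\<tau> *\<^sub>R e + w) \<le> \<tau> + norm w" using norm_triangle_ineq[of "\<tau> *\<^sub>R e" w] e True by simp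
            ultimately have "\<tau> *\<^sub>R e + w \<in> cball 0 r" using True unfolding r_def mem_cball_0 by simp
            then show ?thesis using True fb[of "y - w"] B0
              by (simp add: P_def abs_mult add.commute mult_right_mono)
          qed
          then show ?thesis using B0 by (simp add: ennreal_mult[symmetric])
        qed
        have "(\<integral>\<^sup>+w. ennreal (norm (P \<tau> w)) \<partial>lborel) \<le> (\<integral>\<^sup>+w. ennreal B * ennreal (\<bar>dK (\<tau> *\<^sub>R e + w)\<bar> * indicator (cball 0 r) (\<tau> *\<^sub>R e + w)) \<partial>lborel)"
          by (rule nn_integral_mono) (rule pw)
        also have "\<dots> = ennreal B * (\<integral>\<^sup>+w. ennreal (\<bar>dK (\<tau> *\<^sub>R e + w)\<bar> * indicator (cball 0 r) (\<tau> *\<^sub>R e + w)) \<partial>lborel)"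
          by (rule nn_integral_cmult) measurable
        also have "(\<integral>\<^sup>+w. ennreal (\<bar>dK (\<tau> *\<^sub>R e + w)\<bar> * indicator (cball 0 r) (\<tau> *\<^sub>R e + w)) \<partial>lborel) = J"
          unfolding J_def by (rule nn_integral_translate[symmetric]) measurable
        finally show ?thesis using True by simp
      qed
      have "(\<integral>\<^sup>+p. ennreal (norm (case_prod P p)) \<partial>(lborel \<Otimes>\<^sub>M lborel)) = (\<integral>\<^sup>+\<tau>. (\<integral>\<^sup>+w. ennreal (norm (P \<tau> w)) \<partial>lborel) \<partial>lborel)"
        by (subst lborel.nn_integral_fst[symmetric]) (use cPm in auto)
      also have "\<dots> \<le> (\<integral>\<^sup>+\<tau>. ennreal B * J * indicator {0..t} \<tau> \<partial>lborel)"
        by (rule nn_integral_mono) (rule inner)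
      also have "\<dots> = ennreal B * J * emeasure lborel {0..t}" by (rule nn_integral_cmult_indicator) simp
      also have "\<dots> < \<infinity>" using J t0 by (simp add: ennreal_mult_less_top)
      finally show "(\<integral>\<^sup>+p. ennreal (norm (case_prod P p)) \<partial>(lborel \<Otimes>\<^sub>M lborel)) < \<infinity>" .
    qed
    have "G t - G 0 = (LINT w|lborel. f (y - w) * K (w + t *\<^sub>R e) - f (y - w) * K (w + 0 *\<^sub>R e))"
      unfolding Gt using Bochner_Integration.integral_diff[OF intK[of t] intK[of 0]] by simp
    also have "\<dots> = (LINT w|lborel. (LINT \<tau>|lborel. P \<tau> w))"
    proof (rule integral_cong_AE)
      show "(\<lambda>w. f (y - w) * K (w + t *\<^sub>R e) - f (y - w) * K (w + 0 *\<^sub>R e)) \<in> borel_measurable lborel"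
        by measurable
      show "(\<lambda>w. LINT \<tau>|lborel. P \<tau> w) \<in> borel_measurable lborel"
        by (rule lborel.borel_measurable_lebesgue_integral) (use Pm2 in \<open>simp add: case_prod_unfold\<close>)
      show "AE w in lborel. f (y - w) * K (w + t *\<^sub>R e) - f (y - w) * K (w + 0 *\<^sub>R e) = (LINT \<tau>|lborel. P \<tau> w)"
        using Kd
      proof eventually_elim
        case (elim w)
        have "(LINT \<tau>|lborel. indicator {0..t} \<tau> *\<^sub>R dK (w + \<tau> *\<^sub>R e)) = K (w + t *\<^sub>R e) - K (w + 0 *\<^sub>R e)"
        proof (rule integral_FTC_atLeastAtMost[OF t0])
          show "((\<lambda>u. K (w + u *\<^sub>R e)) has_vector_derivative dK (w + x *\<^sub>R e)) (at x within {0..t})" for x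
            using elim by (auto simp: has_real_derivative_iff_has_vector_derivative[symmetric] intro: has_field_derivative_at_within)
          show "continuous_on {0..t} (\<lambda>\<tau>. dK (w + \<tau> *\<^sub>R e))"
            using elim by (auto intro: continuous_on_subset)
        qed
        then have "(LINT \<tau>|lborel. P \<tau> w) = f (y - w) * (K (w + t *\<^sub>R e) - K (w + 0 *\<^sub>R e))"
          unfolding P_def by (simp add: ac_simps)
        then show ?case by (simp add: algebra_simps)
      qed
    qed
    also have "\<dots> = (LINT \<tau>|lborel. (LINT w|lborel. P \<tau> w))"
      by (rule lborel_pair.Fubini_integral[OF Pint])
    also have "\<dots> = (LINT \<tau>|lborel. indicator {0..t} \<tau> * H \<tau>)"
      unfolding P_def Ht by (simp only: integral_mult_right_zero)
    finally show ?thesis .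
  qed
  have Hint: "(LINT \<tau>|lborel. indicator {0..t} \<tau> * H \<tau>) = integral {0..t} H" for t
  proof -
    have "set_integrable lborel {0..t} H"
      by (rule borel_integrable_atLeastAtMost') (rule continuous_on_subset[OF Hcont], auto)
    then have "(LINT \<tau>:{0..t}|lborel. H \<tau>) = integral {0..t} H" by (rule set_borel_integral_eq_integral(2))
    then show ?thesis by (simp add: set_lebesgue_integral_def)
  qed
  have d1: "((\<lambda>x. integral {0..x} H) has_real_derivative H 0) (at 0 within {0..1})"
    by (rule integral_has_real_derivative) (auto intro: continuous_on_subset[OF Hcont])
  have d2: "((\<lambda>x. integral {0..x} H) has_real_derivative conv K f' y) (at 0 within {0..1})"
  proof (rule has_field_derivative_transform_within[where f="\<lambda>t. G t - G 0"])
    have "((\<lambda>t. G t - G 0) has_real_derivative conv K f' y - 0) (at 0)"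
      by (rule DERIV_diff[OF dG DERIV_const])
    then show "((\<lambda>t. G t - G 0) has_real_derivative conv K f' y) (at 0 within {0..1})"
      by (simp add: has_field_derivative_at_within)
    show "G x - G 0 = integral {0..x} H" if "x \<in> {0..1}" "dist x 0 < 1" for x
      using claim[of x] Hint[of x] that by simp
  qed auto
  have "conv K f' y = H 0"
  proof (rule has_field_derivative_unique[OF d2 d1])
    have "at (0::real) within {0..1} = at_right 0" by (rule at_within_Icc_at_right) simp
    then show "at (0::real) within {0..1} \<noteq> bot" by simp
  qed
  then show ?thesis by (simp add: H_def)
qed



lemma pdl_append: "pdl (xs @ ys) f = pdl xs (pdl ys f)"
  by (induction xs) auto

lemma norm_axis1: "norm (axis (i::3) (1::real)) = 1"
  by simp

lemma C4b_deriv: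
  "C4b f \<Longrightarrow> length is < 4 \<Longrightarrow> ((\<lambda>t. pdl is f (y + t *\<^sub>R axis i 1)) has_real_derivative pdl (i # is) f y) (at 0)"
  unfolding C4b_def by blast

lemma C4b_cont: "C4b f \<Longrightarrow> length is \<le> 4 \<Longrightarrow> continuous_on UNIV (pdl is f)"
  unfolding C4b_def by blast

lemma C4b_bnd: "C4b f \<Longrightarrow> length is \<le> 4 \<Longrightarrow> \<exists>B. \<forall>x. \<bar>pdl is f x\<bar> \<le> B"
  unfolding C4b_def bounded_iff by fastforce

lemma C4b_meas: "C4b f \<Longrightarrow> length is \<le> 4 \<Longrightarrow> pdl is f \<in> borel_measurable borel"
  by (rule borel_measurable_continuous_onI) (rule C4b_cont)

lemma C4b_supp:
  assumes f: "C4b f" and S: "closed S" and sf: "\<And>x. f x \<noteq> 0 \<Longrightarrow> x \<in> S"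
  shows "length is \<le> 4 \<Longrightarrow> pdl is f x \<noteq> 0 \<Longrightarrow> x \<in> S"
proof (induction "is" arbitrary: x)
  case Nil then show ?case using sf by simp
next
  case (Cons i "is")
  show ?case
  proof (rule ccontr)
    assume xS: "x \<notin> S"
    obtain d where d: "d > 0" "ball x d \<subseteq> - S"
      using S xS by (metis closed_def open_contains_ball ComplI)
    have d1: "((\<lambda>t. pdl is f (x + t *\<^sub>R axis i 1)) has_real_derivative pdl (i # is) f x) (at 0)"
      by (rule C4b_deriv[OF f]) (use Cons.prems in simp)
    have ev: "\<forall>\<^sub>F t in nhds 0. pdl is f (x + t *\<^sub>R axis i 1) = 0"
    proof -
      have "\<forall>\<^sub>F t in nhds (0::real). t \<in> ball 0 d" using d by (intro eventually_nhds_in_open) auto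
      then show ?thesis
      proof eventually_elim
        case (elim t)
        then have "x + t *\<^sub>R axis i 1 \<in> ball x d" by (simp add: dist_norm norm_axis1)
        then have "x + t *\<^sub>R axis i 1 \<notin> S" using d by auto
        then show ?case using Cons.IH[of "x + t *\<^sub>R axis i 1"] Cons.prems by auto
      qed
    qed
    have "((\<lambda>t. pdl is f (x + t *\<^sub>R axis i 1)) has_real_derivative 0) (at 0) \<longleftrightarrow> ((\<lambda>t. 0) has_real_derivative 0) (at 0)"
      by (rule DERIV_cong_ev) (use ev in auto)
    then have "((\<lambda>t. pdl is f (x + t *\<^sub>R axis i 1)) has_real_derivative 0) (at 0)" by simp
    then have "pdl (i # is) f x = 0" using DERIV_unique d1 by blast
    then show False using Cons.prems by simp
  qed
qed



lemma pdl_diff: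
  assumes f: "C4b f" and g: "C4b g"
  shows "length is \<le> 4 \<Longrightarrow> pdl is (\<lambda>x. f x - g x) = (\<lambda>x. pdl is f x - pdl is g x)"
proof (induction "is")
  case Nil then show ?case by simp
next
  case (Cons i "is")
  have l: "length is < 4" using Cons.prems by simp
  show ?case
  proof (rule ext)
    fix y
    have "((\<lambda>t. pdl is f (y + t *\<^sub>R axis i 1) - pdl is g (y + t *\<^sub>R axis i 1)) has_real_derivative
        pdl (i # is) f y - pdl (i # is) g y) (at 0)"
      by (rule DERIV_diff; rule C4b_deriv) (use f g l in auto)
    then show "pdl (i # is) (\<lambda>x. f x - g x) y = pdl (i # is) f y - pdl (i # is) g y"
      using Cons.IH l by (simp add: pd_def DERIV_imp_deriv)
  qed
qed

lemma C4b_diff: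
  assumes f: "C4b f" and g: "C4b g"
  shows "C4b (\<lambda>x. f x - g x)"
  unfolding C4b_def
proof (intro conjI allI impI)
  fix "is" :: "3 list" and i y
  assume l: "length is < 4"
  have "((\<lambda>t. pdl is f (y + t *\<^sub>R axis i 1) - pdl is g (y + t *\<^sub>R axis i 1)) has_real_derivative
        pdl (i # is) f y - pdl (i # is) g y) (at 0)"
    by (rule DERIV_diff; rule C4b_deriv) (use f g l in auto)
  then show "((\<lambda>t. pdl is (\<lambda>x. f x - g x) (y + t *\<^sub>R axis i 1)) has_real_derivative pdl (i # is) (\<lambda>x. f x - g x) y) (at 0)"
    using pdl_diff[OF f g, of "is"] pdl_diff[OF f g, of "i # is"] l by simp
next
  fix "is" :: "3 list"
  assume l: "length is \<le> 4"
  have eq: "pdl is (\<lambda>x. f x - g x) = (\<lambda>x. pdl is f x - pdl is g x)" by (rule pdl_diff[OF f g l])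
  show "continuous_on UNIV (pdl is (\<lambda>x. f x - g x))"
    unfolding eq by (intro continuous_on_diff C4b_cont f g l)
  obtain B1 where B1: "\<And>x. \<bar>pdl is f x\<bar> \<le> B1" using C4b_bnd[OF f l] by blast
  obtain B2 where B2: "\<And>x. \<bar>pdl is g x\<bar> \<le> B2" using C4b_bnd[OF g l] by blast
  show "bounded (range (pdl is (\<lambda>x. f x - g x)))"
    unfolding eq bounded_iff
  proof (intro exI ballI)
    fix v assume "v \<in> range (\<lambda>x. pdl is f x - pdl is g x)"
    then obtain x where "v = pdl is f x - pdl is g x" by auto
    then show "norm v \<le> B1 + B2" using B1[of x] B2[of x] by simp
  qed
qed

lemma pdl_conv:
  assumes L: "locint L" and f: "C4b f" and S: "closed S" "\<And>x. x \<in> S \<Longrightarrow> norm x \<le> R"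
    and sf: "\<And>x. f x \<noteq> 0 \<Longrightarrow> x \<in> S"
  shows "length is \<le> 4 \<Longrightarrow> pdl is (conv L f) = conv L (pdl is f)"
proof (induction "is")
  case Nil then show ?case by simp
next
  case (Cons i "is")
  have l: "length is < 4" using Cons.prems by simp
  show ?case
  proof (rule ext)
    fix y
    obtain B where B: "\<And>x. \<bar>pdl is f x\<bar> \<le> B" using C4b_bnd[OF f, of "is"] l by auto
    obtain M where M: "\<And>x. \<bar>pdl (i # is) f x\<bar> \<le> M" using C4b_bnd[OF f, of "i # is"] l by auto
    have "((\<lambda>t. conv L (pdl is f) (y + t *\<^sub>R axis i 1)) has_real_derivative conv L (pdl (i # is) f) y) (at 0)"
    proof (rule convA[OF L _ _ _ B M])
      show "pdl is f \<in> borel_measurable borel" "pdl (i # is) f \<in> borel_measurable borel"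
        using l C4b_meas[OF f, of "is"] C4b_meas[OF f, of "i # is"] by auto
      show "((\<lambda>t. pdl is f (x + t *\<^sub>R axis i 1)) has_real_derivative pdl (i # is) f x) (at 0)" for x
        using l by (rule C4b_deriv[OF f])
      show "pdl is f x \<noteq> 0 \<Longrightarrow> norm x \<le> R" for x
        using C4b_supp[OF f S(1) sf, of "is" x] l S(2) by auto
    qed simp
    then show "pdl (i # is) (conv L f) y = conv L (pdl (i # is) f) y"
      using Cons.IH l by (simp add: pd_def DERIV_imp_deriv)
  qed
qed



lemma Qf_pos:
  assumes "a > 0" "b > 0" "z$k \<noteq> 0"
  shows "Qf a b z > 0"
proof -
  have "0 \<le> a * (z$1)^2" "0 \<le> b * (z$2)^2" "0 \<le> b * (z$3)^2" using assms by auto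
  moreover have "0 < a * (z$1)^2 \<or> 0 < b * (z$2)^2 \<or> 0 < b * (z$3)^2"
    using assms exhaust_3[of k] by auto
  ultimately show ?thesis by (auto simp: Qf_def distrib_left)
qed

lemma line_comp: "(w + u *\<^sub>R axis j 1) $ i = w $ i + (if i = j then u else 0)"
  by (simp add: axis_def)

lemma Qf_line_deriv:
  "((\<lambda>u. Qf a b (w + u *\<^sub>R axis j 1)) has_real_derivative 2 * wt a b j * (w + \<tau> *\<^sub>R axis j 1)$j) (at \<tau>)"
proof -
  have "((\<lambda>u. a * (w$1 + u * axis j 1 $ 1)^2 + b * ((w$2 + u * axis j 1 $ 2)^2 + (w$3 + u * axis j 1 $ 3)^2))
     has_real_derivative 2 * wt a b j * (w$j + \<tau>)) (at \<tau>)"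
    using exhaust_3[of j]
    apply (elim disjE)
      apply (simp_all add: wt_def axis_def)
      apply (auto intro!: derivative_eq_intros simp: algebra_simps)
    done
  then show ?thesis by (simp add: Qf_def)
qed

lemma Kf_line_deriv:
  assumes ab: "a > 0" "b > 0" and pos: "\<And>u. Qf a b (w + u *\<^sub>R axis j 1) > 0"
  shows "((\<lambda>u. Kf a b c (w + u *\<^sub>R axis j 1)) has_real_derivative dKf a b c j (w + \<tau> *\<^sub>R axis j 1)) (at \<tau>)"
proof -
  define q where "q u = Qf a b (w + u *\<^sub>R axis j 1)" for u
  have dq: "(q has_real_derivative 2 * wt a b j * (w + \<tau> *\<^sub>R axis j 1)$j) (at \<tau>)"
    unfolding q_def by (rule Qf_line_deriv)
  have qp: "q \<tau> > 0" unfolding q_def by (rule pos)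
  have "((\<lambda>u. c / sqrt (q u)) has_real_derivative
      - (c * (inverse (sqrt (q \<tau>)) / 2 * (2 * wt a b j * (w + \<tau> *\<^sub>R axis j 1)$j))) / (sqrt (q \<tau>) * sqrt (q \<tau>))) (at \<tau>)"
    using qp by (auto intro!: derivative_eq_intros dq)
  moreover have "- (c * (inverse (sqrt (q \<tau>)) / 2 * (2 * wt a b j * (w + \<tau> *\<^sub>R axis j 1)$j))) / (sqrt (q \<tau>) * sqrt (q \<tau>))
      = dKf a b c j (w + \<tau> *\<^sub>R axis j 1)"
    using qp unfolding dKf_def q_def[symmetric] by (simp add: field_simps)
  ultimately show ?thesis by (simp add: Kf_def q_def)
qed

lemma dKf_line_cont:
  assumes pos: "\<And>u. Qf a b (w + u *\<^sub>R axis j 1) > 0"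
  shows "continuous_on UNIV (\<lambda>u. dKf a b c j (w + u *\<^sub>R axis j 1))"
proof -
  have "continuous_on UNIV (\<lambda>u. Qf a b (w + u *\<^sub>R axis j 1))"
    unfolding Qf_def by (intro continuous_intros)
  moreover have "continuous_on UNIV (\<lambda>u. (w + u *\<^sub>R axis j 1)$j)"
    by (intro continuous_intros)
  ultimately show ?thesis
    unfolding dKf_def using pos
    by (intro continuous_intros) (auto simp: less_imp_neq[symmetric])
qed

lemma Kd_AE:
  assumes ab: "a > 0" "b > 0"
  shows "AE w in lborel. (\<forall>\<tau>. ((\<lambda>u. Kf a b c (w + u *\<^sub>R axis j 1)) has_real_derivative dKf a b c j (w + \<tau> *\<^sub>R axis j 1)) (at \<tau>))
               \<and> continuous_on UNIV (\<lambda>\<tau>. dKf a b c j (w + \<tau> *\<^sub>R axis j 1))"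
proof -
  obtain k :: 3 where k: "k \<noteq> j" using exhaust_3[of j] by (metis one_neq_zero zero_neq_numeral num.distinct(1) numeral_eq_iff semiring_norm(84) num.simps(4) numeral_2_eq_2) 
  show ?thesis
    using hyper_null[of k]
  proof eventually_elim
    case (elim w)
    have pos: "Qf a b (w + u *\<^sub>R axis j 1) > 0" for u
      by (rule Qf_pos[OF ab, of _ k]) (use elim k in \<open>simp add: line_comp axis_def\<close>)
    show ?case using Kf_line_deriv[OF ab pos] dKf_line_cont[OF pos] by blast
  qed
qed



lemma conv_bound:
  fixes L h :: "real^3 \<Rightarrow> real"
  assumes [measurable]: "L \<in> borel_measurable borel" "h \<in> borel_measurable borel"
    and hb: "\<And>x. \<bar>h x\<bar> \<le> S"
    and hs: "\<And>z. h (y - z) \<noteq> 0 \<Longrightarrow> z \<in> Bx"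
    and Bm[measurable]: "Bx \<in> sets borel"
    and C: "C \<ge> 0" and LB: "(\<integral>\<^sup>+z. ennreal (\<bar>L z\<bar> * indicator Bx z) \<partial>lborel) \<le> ennreal C"
  shows "\<bar>conv L h y\<bar> \<le> S * C"
proof -
  have S0: "S \<ge> 0" using hb[of 0] by linarith
  have "\<bar>conv L h y\<bar> \<le> (LINT z|lborel. \<bar>h (y - z) * L z\<bar>)"
    unfolding conv_def by (rule integral_abs_bound)
  also have "\<dots> = enn2real (\<integral>\<^sup>+z. ennreal \<bar>h (y - z) * L z\<bar> \<partial>lborel)"
    by (rule integral_eq_nn_integral) auto
  also have "\<dots> \<le> S * C"
  proof (rule enn2real_leI)
    show "0 \<le> S * C" using S0 C by simp
    have "(\<integral>\<^sup>+z. ennreal \<bar>h (y - z) * L z\<bar> \<partial>lborel) \<le> (\<integral>\<^sup>+z. ennreal S * ennreal (\<bar>L z\<bar> * indicator Bx z) \<partial>lborel)"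
    proof (rule nn_integral_mono)
      fix z :: "real^3"
      have "\<bar>h (y - z) * L z\<bar> \<le> S * (\<bar>L z\<bar> * indicator Bx z)"
      proof (cases "h (y - z) = 0")
        case True then show ?thesis using S0 by simp
      next
        case False
        then have "z \<in> Bx" by (rule hs)
        then show ?thesis using hb[of "y - z"] by (simp add: abs_mult mult_right_mono)
      qed
      then show "ennreal \<bar>h (y - z) * L z\<bar> \<le> ennreal S * ennreal (\<bar>L z\<bar> * indicator Bx z)"
        using S0 by (simp add: ennreal_mult[symmetric])
    qed
    also have "\<dots> = ennreal S * (\<integral>\<^sup>+z. ennreal (\<bar>L z\<bar> * indicator Bx z) \<partial>lborel)"
      by (rule nn_integral_cmult) measurable
    also have "\<dots> \<le> ennreal S * ennreal C" by (rule mult_left_mono[OF LB]) simp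
    also have "\<dots> = ennreal (S * C)" using S0 C by (simp add: ennreal_mult)
    finally show "(\<integral>\<^sup>+z. ennreal \<bar>h (y - z) * L z\<bar> \<partial>lborel) \<le> ennreal (S * C)" .
  qed
  finally show ?thesis .
qed


lemma box3_sets[measurable]: "box3 A1 A2 A3 \<in> sets borel"
  unfolding box3_def by measurable

lemma UNIV3: "(UNIV :: 3 set) = {1, 2, 3}" using exhaust_3 by auto

lemma cnorm_ge: "\<bar>x$2\<bar> \<le> cnorm x" "\<bar>x$3\<bar> \<le> cnorm x"
proof -
  have "sqrt ((x$2)^2) \<le> sqrt ((x$2)^2 + (x$3)^2)" "sqrt ((x$3)^2) \<le> sqrt ((x$2)^2 + (x$3)^2)"
    by (rule real_sqrt_le_mono; simp)+
  then show "\<bar>x$2\<bar> \<le> cnorm x" "\<bar>x$3\<bar> \<le> cnorm x" by (simp_all add: cnorm_def)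
qed

lemma cnorm_diff: "cnorm (x - y) \<le> cnorm x + cnorm y"
proof -
  have "sqrt ((x$2 + -(y$2))^2 + (x$3 + -(y$3))^2) \<le> sqrt ((x$2)^2 + (x$3)^2) + sqrt ((-(y$2))^2 + (-(y$3))^2)"
    by (rule real_sqrt_sum_squares_triangle_ineq)
  then show ?thesis unfolding cnorm_def by (simp only: vector_minus_component power2_minus diff_conv_add_uminus vector_add_component vector_uminus_component)
qed

lemma Xplus_closed: "closed (Xplus s)"
proof -
  have c1: "continuous_on UNIV (\<lambda>y::real^3. \<bar>y$1\<bar>)" by (intro continuous_intros)
  have c2: "continuous_on UNIV (\<lambda>y::real^3. sqrt ((y$2)^2 + (y$3)^2))" by (intro continuous_intros)
  have "closed {y::real^3. \<bar>y$1\<bar> \<le> exp (3 * s / 2)}" by (rule closed_Collect_le[OF c1 continuous_on_const])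
  moreover have "closed {y::real^3. sqrt ((y$2)^2 + (y$3)^2) \<le> exp (s / 2)}" by (rule closed_Collect_le[OF c2 continuous_on_const])
  ultimately have "closed ({y::real^3. \<bar>y$1\<bar> \<le> exp (3 * s / 2)} \<inter> {y::real^3. sqrt ((y$2)^2 + (y$3)^2) \<le> exp (s / 2)})"
    by (rule closed_Int)
  moreover have "Xplus s = {y::real^3. \<bar>y$1\<bar> \<le> exp (3 * s / 2)} \<inter> {y::real^3. sqrt ((y$2)^2 + (y$3)^2) \<le> exp (s / 2)}"
    by (auto simp: Xplus_def cnorm_def)
  ultimately show ?thesis by simp
qed

lemma Xplus_norm: "x \<in> Xplus s \<Longrightarrow> norm x \<le> exp (3 * s / 2) + 2 * exp (s / 2)"
proof -
  assume x: "x \<in> Xplus s"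
  have "norm x \<le> (\<Sum>i\<in>UNIV. \<bar>x$i\<bar>)" by (rule norm_le_l1_cart)
  also have "\<dots> = \<bar>x$1\<bar> + \<bar>x$2\<bar> + \<bar>x$3\<bar>"
    unfolding UNIV3 by (simp add: add.assoc)
  also have "\<dots> \<le> exp (3 * s / 2) + 2 * exp (s / 2)"
  proof -
    have "\<bar>x$1\<bar> \<le> exp (3 * s / 2)" "cnorm x \<le> exp (s / 2)" using x unfolding Xplus_def by auto
    then show ?thesis using cnorm_ge[of x] by linarith
  qed
  finally show ?thesis .
qed



lemma sqrt_exp: "sqrt (exp (x::real)) = exp (x / 2)"
proof -
  have "exp x = (exp (x / 2))^2" by (simp add: power2_eq_square exp_add[symmetric])
  then show ?thesis by simp
qed

lemma exp_powr': "exp (u::real) powr p = exp (p * u)"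
  by (simp add: powr_def)

lemma I1_exp: "I1 (-2/3) (exp u) (2 * exp v) = 6 * 2 powr (1/3) * exp (-2/3 * u + v / 3)"
proof -
  have "(2 * exp v) powr (-2/3 + 1) = 2 powr (1/3) * exp (v / 3)"
    by (simp add: powr_mult exp_powr')
  then show ?thesis
  proof -
    have "exp (-2/3 * u + v / 3) = exp (v/3) * exp (-(u*2/3))" by (simp add: exp_add[symmetric] field_simps)
    then show ?thesis using \<open>(2 * exp v) powr (-2/3 + 1) = _\<close> unfolding I1_def exp_powr' by (simp add: field_simps)
  qed
qed

lemma cube_root2: "2 powr (1/3) * 2 powr (1/3) * 2 powr (1/3) = (2::real)"
proof -
  have "2 powr (1/3) * 2 powr (1/3) * 2 powr (1/3) = (2::real) powr (1/3 + 1/3 + 1/3)"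
    by (simp only: powr_add)
  also have "\<dots> = 2" by simp
  finally show ?thesis .
qed

lemma const_prod:
  "I1 (-2/3) (sqrt (exp (-3 * s))) (2 * exp (3 * s / 2)) * I1 (-2/3) (sqrt (exp (- s))) (2 * exp (s / 2))
     * I1 (-2/3) (sqrt (exp (- s))) (2 * exp (s / 2)) = 432 * exp (5 * s / 2)"
proof -
  have "I1 (-2/3) (sqrt (exp (-3 * s))) (2 * exp (3 * s / 2)) = 6 * 2 powr (1/3) * exp (3 * s / 2)"
    unfolding sqrt_exp I1_exp by (simp add: field_simps)
  moreover have "I1 (-2/3) (sqrt (exp (- s))) (2 * exp (s / 2)) = 6 * 2 powr (1/3) * exp (s / 2)"
    unfolding sqrt_exp I1_exp by (simp add: field_simps)
  ultimately have "I1 (-2/3) (sqrt (exp (-3 * s))) (2 * exp (3 * s / 2)) * I1 (-2/3) (sqrt (exp (- s))) (2 * exp (s / 2))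
     * I1 (-2/3) (sqrt (exp (- s))) (2 * exp (s / 2)) = 216 * (2 powr (1/3) * 2 powr (1/3) * 2 powr (1/3)) * (exp (3 * s / 2) * exp (s / 2) * exp (s / 2))"
    by simp
  also have "\<dots> = 432 * exp (5 * s / 2)"
    unfolding cube_root2 by (simp add: exp_add[symmetric] field_simps)
  finally show ?thesis .
qed

lemma const_1:
  "exp (-5 * s / 2) * sqrt (wt (exp (-3 * s)) (exp (- s)) 1) * (432 * exp (5 * s / 2)) = 432 * exp (- 3 * s / 2)"
  by (simp add: wt_def sqrt_exp mult.commute mult.left_commute exp_add[symmetric] field_simps)

lemma const_nu:
  "\<nu> \<noteq> 1 \<Longrightarrow> exp (-5 * s / 2) * sqrt (wt (exp (-3 * s)) (exp (- s)) \<nu>) * (432 * exp (5 * s / 2)) = 432 * exp (- s / 2)"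
  by (simp add: wt_def sqrt_exp mult.commute mult.left_commute exp_add[symmetric] field_simps)



lemma supn_ge: "C4b f \<Longrightarrow> length is \<le> 4 \<Longrightarrow> \<bar>pdl is f x\<bar> \<le> supn (pdl is f)"
  unfolding supn_def
proof (rule cSUP_upper)
  assume "C4b f" "length is \<le> 4"
  then obtain B where "\<And>x. \<bar>pdl is f x\<bar> \<le> B" using C4b_bnd by blast
  then show "bdd_above (range (\<lambda>y. \<bar>pdl is f y\<bar>))" by (intro bdd_aboveI2) auto
qed simp

lemma root6_le: "0 < \<epsilon> \<Longrightarrow> \<epsilon> \<le> 1/64 \<Longrightarrow> root 6 \<epsilon> \<le> 1/2"
proof -
  assume "0 < \<epsilon>" "\<epsilon> \<le> 1/64"
  then have "root 6 \<epsilon> \<le> root 6 (1/64)" by (intro real_root_le_mono) auto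
  also have "root 6 (1/64) = (1/2::real)" by (rule real_root_pos_unique) (auto simp: power_divide)
  finally show ?thesis .
qed

lemma sqrt_le: "0 < \<epsilon> \<Longrightarrow> \<epsilon> \<le> 1/64 \<Longrightarrow> sqrt \<epsilon> \<le> 1/2"
proof -
  assume "0 < \<epsilon>" "\<epsilon> \<le> 1/64"
  then have "sqrt \<epsilon> \<le> sqrt (1/4)" by (intro real_sqrt_le_mono) auto
  also have "sqrt (1/4) = (1/2::real)" by (simp add: real_sqrt_divide)
  finally show ?thesis .
qed

lemma in_box:
  assumes e: "0 < \<epsilon>" "\<epsilon> \<le> 1/64" and y: "y \<in> Xs \<epsilon> s" and x: "y - z \<in> Xplus s"
  shows "z \<in> box3 (2 * exp (3 * s / 2)) (2 * exp (s / 2)) (2 * exp (s / 2))"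
proof -
  have z: "z = y - (y - z)" by simp
  have y1: "\<bar>y$1\<bar> \<le> exp (3 * s / 2)"
  proof -
    have "\<bar>y$1\<bar> \<le> 2 * sqrt \<epsilon> * exp (3 * s / 2)" using y by (simp add: Xs_def)
    also have "\<dots> \<le> 2 * (1/2) * exp (3 * s / 2)" using sqrt_le[OF e] by (intro mult_right_mono mult_left_mono) auto
    finally show ?thesis by simp
  qed
  have y2: "cnorm y \<le> exp (s / 2)"
  proof -
    have "cnorm y \<le> 2 * root 6 \<epsilon> * exp (s / 2)" using y by (simp add: Xs_def)
    also have "\<dots> \<le> 2 * (1/2) * exp (s / 2)" using root6_le[OF e] by (intro mult_right_mono mult_left_mono) auto
    finally show ?thesis by simp
  qed
  have x1: "\<bar>(y - z)$1\<bar> \<le> exp (3 * s / 2)" and x2: "cnorm (y - z) \<le> exp (s / 2)"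
    using x by (auto simp: Xplus_def)
  have "\<bar>z$1\<bar> \<le> \<bar>y$1\<bar> + \<bar>(y - z)$1\<bar>" by simp
  moreover have "\<bar>z$2\<bar> \<le> cnorm y + cnorm (y - z)" "\<bar>z$3\<bar> \<le> cnorm y + cnorm (y - z)"
    using cnorm_ge[of z] cnorm_diff[of y "y - z"] by simp_all
  ultimately show ?thesis using y1 y2 x1 x2 by (simp add: box3_def)
qed



lemma main_bound:
  fixes \<epsilon> s :: real and Rel Rpl :: "real^3 \<Rightarrow> real" and y :: "real^3" and \<gamma> :: "3 list" and j :: 3
  assumes e: "0 < \<epsilon>" "\<epsilon> \<le> 1/64" and Rel: "C4b Rel" and Rpl: "C4b Rpl"
    and sRel: "\<forall>x. Rel x \<noteq> 0 \<longrightarrow> x \<in> Xplus s" and sRpl: "\<forall>x. Rpl x \<noteq> 0 \<longrightarrow> x \<in> Xplus s"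
    and y: "y \<in> Xs \<epsilon> s" and l: "length \<gamma> \<le> 4"
  shows "\<bar>pdl (\<gamma> @ [j]) (Phi s Rel Rpl) y\<bar> \<le> (supn (pdl \<gamma> Rel) + supn (pdl \<gamma> Rpl)) *
      (exp (-5 * s / 2) * sqrt (wt (exp (-3 * s)) (exp (- s)) j) * (432 * exp (5 * s / 2)))"
proof -
  define a where "a = exp (-3 * s)"
  define b where "b = exp (- s)"
  define c where "c = exp (-5 * s / 2)"
  have abc: "a > 0" "b > 0" "c > 0" by (simp_all add: a_def b_def c_def)
  define \<rho> where "\<rho> x = Rpl x - Rel x" for x
  have \<rho>C: "C4b \<rho>" unfolding \<rho>_def by (rule C4b_diff[OF Rpl Rel])
  define R where "R = exp (3 * s / 2) + 2 * exp (s / 2)"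
  have SR: "\<And>x. x \<in> Xplus s \<Longrightarrow> norm x \<le> R" unfolding R_def by (rule Xplus_norm)
  have S: "closed (Xplus s)" by (rule Xplus_closed)
  have \<rho>s: "\<And>x. \<rho> x \<noteq> 0 \<Longrightarrow> x \<in> Xplus s" using sRel sRpl unfolding \<rho>_def by force
  have Phi_eq: "Phi s Rel Rpl = conv (Kf a b c) \<rho>"
  proof (rule ext)
    fix y :: "real^3"
    have "(cnorm z)^2 = (z$2)^2 + (z$3)^2" for z by (simp add: cnorm_def)
    then show "Phi s Rel Rpl y = conv (Kf a b c) \<rho> y"
      unfolding Phi_def conv_def Kf_def Qf_def \<rho>_def a_def b_def c_def by simp
  qed
  have locK: "locint (Kf a b c)" by (rule locint_Kf[OF abc])
  have locdK: "locint (dKf a b c j)" by (rule locint_dKf[OF abc])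
  have dj: "pdl [j] (Phi s Rel Rpl) = conv (dKf a b c j) \<rho>"
  proof -
    have "pdl [j] (Phi s Rel Rpl) = conv (Kf a b c) (pdl [j] \<rho>)"
    proof -
      have ll: "length [j] \<le> 4" by simp
      show ?thesis unfolding Phi_eq by (rule pdl_conv[OF locK \<rho>C S SR \<rho>s ll])
    qed
    also have "\<dots> = conv (dKf a b c j) \<rho>"
    proof (rule ext)
      fix y' :: "real^3"
      obtain B where B: "\<And>x. \<bar>pdl [] \<rho> x\<bar> \<le> B" using C4b_bnd[OF \<rho>C, of "[]"] by auto
      obtain M where M: "\<And>x. \<bar>pdl [j] \<rho> x\<bar> \<le> M" using C4b_bnd[OF \<rho>C, of "[j]"] by auto
      show "conv (Kf a b c) (pdl [j] \<rho>) y' = conv (dKf a b c j) \<rho> y'"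
      proof (rule convB[OF locK locdK Kd_AE[OF abc(1,2)]])
        show "continuous_on UNIV \<rho>" using C4b_cont[OF \<rho>C, of "[]"] by simp
        show "pdl [j] \<rho> \<in> borel_measurable borel" by (rule C4b_meas[OF \<rho>C]) simp
        show "((\<lambda>t. \<rho> (x + t *\<^sub>R axis j 1)) has_real_derivative pdl [j] \<rho> x) (at 0)" for x
          using C4b_deriv[OF \<rho>C, of "[]" x j] by simp
        show "\<bar>\<rho> x\<bar> \<le> B" for x using B[of x] by simp
        show "\<bar>pdl [j] \<rho> x\<bar> \<le> M" for x by (rule M)
        show "\<rho> x \<noteq> 0 \<Longrightarrow> norm x \<le> R" for x using \<rho>s SR by blast
      qed simp
    qed
    finally show ?thesis .
  qed
  have "pdl (\<gamma> @ [j]) (Phi s Rel Rpl) = pdl \<gamma> (conv (dKf a b c j) \<rho>)"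
    unfolding pdl_append dj by (rule refl)
  also have "\<dots> = conv (dKf a b c j) (pdl \<gamma> \<rho>)"
    by (rule pdl_conv[OF locdK \<rho>C S SR \<rho>s l])
  finally have eq: "pdl (\<gamma> @ [j]) (Phi s Rel Rpl) = conv (dKf a b c j) (pdl \<gamma> \<rho>)" .
  define A1 where "A1 = 2 * exp (3 * s / 2)"
  define A2 where "A2 = 2 * exp (s / 2)"
  have \<gamma>eq: "pdl \<gamma> \<rho> = (\<lambda>x. pdl \<gamma> Rpl x - pdl \<gamma> Rel x)"
    unfolding \<rho>_def by (rule pdl_diff[OF Rpl Rel l])
  have "\<bar>conv (dKf a b c j) (pdl \<gamma> \<rho>) y\<bar> \<le> (supn (pdl \<gamma> Rel) + supn (pdl \<gamma> Rpl)) *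
      (c * sqrt (wt a b j) * (I1 (-2/3) (sqrt a) A1 * I1 (-2/3) (sqrt b) A2 * I1 (-2/3) (sqrt b) A2))"
  proof (rule conv_bound)
    show "dKf a b c j \<in> borel_measurable borel" by simp
    show "pdl \<gamma> \<rho> \<in> borel_measurable borel" by (rule C4b_meas[OF \<rho>C l])
    show "\<bar>pdl \<gamma> \<rho> x\<bar> \<le> supn (pdl \<gamma> Rel) + supn (pdl \<gamma> Rpl)" for x
      using supn_ge[OF Rel l, of x] supn_ge[OF Rpl l, of x] unfolding \<gamma>eq by simp
    show "z \<in> box3 A1 A2 A2" if "pdl \<gamma> \<rho> (y - z) \<noteq> 0" for z
      unfolding A1_def A2_def
      by (rule in_box[OF e y]) (rule C4b_supp[OF \<rho>C S \<rho>s l that])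
    show "box3 A1 A2 A2 \<in> sets borel" by simp
    show "0 \<le> c * sqrt (wt a b j) * (I1 (-2/3) (sqrt a) A1 * I1 (-2/3) (sqrt b) A2 * I1 (-2/3) (sqrt b) A2)"
      using abc by (simp add: I1_def wt_def A1_def A2_def)
    show "(\<integral>\<^sup>+z. ennreal (\<bar>dKf a b c j z\<bar> * indicator (box3 A1 A2 A2) z) \<partial>lborel) \<le>
        ennreal (c * sqrt (wt a b j) * (I1 (-2/3) (sqrt a) A1 * I1 (-2/3) (sqrt b) A2 * I1 (-2/3) (sqrt b) A2))"
      by (rule dKf_box[OF abc]) (simp_all add: A1_def A2_def)
  qed
  also have "I1 (-2/3) (sqrt a) A1 * I1 (-2/3) (sqrt b) A2 * I1 (-2/3) (sqrt b) A2 = 432 * exp (5 * s / 2)"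
    unfolding a_def b_def A1_def A2_def by (rule const_prod)
  finally show ?thesis unfolding eq a_def b_def c_def .
qed

theorem lemma5p2:
  shows "\<exists>C. \<forall>\<epsilon> s Rel Rpl y \<gamma> \<nu>.
    0 < \<epsilon> \<and> \<epsilon> \<le> 1/64 \<and> s \<ge> - ln \<epsilon>
    \<and> C4b Rel \<and> C4b Rpl
    \<and> (\<forall>x. Rel x \<noteq> 0 \<longrightarrow> x \<in> Xplus s)
    \<and> (\<forall>x. Rpl x \<noteq> 0 \<longrightarrow> x \<in> Xplus s)
    \<and> y \<in> Xs \<epsilon> s \<and> length \<gamma> \<le> 4 \<and> \<nu> \<in> {2, 3}
    \<longrightarrow> \<bar>pdl (\<gamma> @ [1]) (Phi s Rel Rpl) y\<bar>
          \<le> C * exp (- 3 * s / 2) * (supn (pdl \<gamma> Rel) + supn (pdl \<gamma> Rpl))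
      \<and> \<bar>pdl (\<gamma> @ [\<nu>]) (Phi s Rel Rpl) y\<bar>
          \<le> C * exp (- s / 2) * (supn (pdl \<gamma> Rel) + supn (pdl \<gamma> Rpl))"
proof (intro exI[of _ 432] allI impI)
  fix \<epsilon> s :: real and Rel Rpl :: "real^3 \<Rightarrow> real" and y :: "real^3" and \<gamma> :: "3 list" and \<nu> :: 3
  assume H: "0 < \<epsilon> \<and> \<epsilon> \<le> 1/64 \<and> s \<ge> - ln \<epsilon>
    \<and> C4b Rel \<and> C4b Rpl
    \<and> (\<forall>x. Rel x \<noteq> 0 \<longrightarrow> x \<in> Xplus s)
    \<and> (\<forall>x. Rpl x \<noteq> 0 \<longrightarrow> x \<in> Xplus s)
    \<and> y \<in> Xs \<epsilon> s \<and> length \<gamma> \<le> 4 \<and> \<nu> \<in> {2, 3}"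
  then have e: "0 < \<epsilon>" "\<epsilon> \<le> 1/64" and Rel: "C4b Rel" and Rpl: "C4b Rpl"
    and sRel: "\<forall>x. Rel x \<noteq> 0 \<longrightarrow> x \<in> Xplus s" and sRpl: "\<forall>x. Rpl x \<noteq> 0 \<longrightarrow> x \<in> Xplus s"
    and y: "y \<in> Xs \<epsilon> s" and l: "length \<gamma> \<le> 4" and nu: "\<nu> \<in> {2, 3}" by auto
  have nu1: "\<nu> \<noteq> 1" using nu by auto
  have S0: "0 \<le> supn (pdl \<gamma> Rel) + supn (pdl \<gamma> Rpl)"
    using supn_ge[OF Rel l, of 0] supn_ge[OF Rpl l, of 0] by linarith
  show "\<bar>pdl (\<gamma> @ [1]) (Phi s Rel Rpl) y\<bar> \<le> 432 * exp (- 3 * s / 2) * (supn (pdl \<gamma> Rel) + supn (pdl \<gamma> Rpl))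
      \<and> \<bar>pdl (\<gamma> @ [\<nu>]) (Phi s Rel Rpl) y\<bar> \<le> 432 * exp (- s / 2) * (supn (pdl \<gamma> Rel) + supn (pdl \<gamma> Rpl))"
    using main_bound[OF e Rel Rpl sRel sRpl y l, of 1] main_bound[OF e Rel Rpl sRel sRpl y l, of \<nu>]
    unfolding const_1 const_nu[OF nu1] by (simp add: mult.commute)
qed


end
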